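(* Consider the coalition formation algorithm for user association (described in the context) applied to a finite set of users $\mathbf{A}\cup\mathbf{D}$ with $n+1$ coalitions $C_0,\dots,C_n$. Starting from an arbitrary initial partition $C_{ini}$, the algorithm always finds a final partition $C_{fin}$ after a finite number of switch operations, and $C_{fin}$ consists of (at most $n+1$) pairwise disjoint coalitions whose union is $\mathbf{A}\cup\mathbf{D}$.
   Context: Setting: a downlink mmWave system with one base station (BS), indexed $n$, and $n$ mobile relays (MRs), indexed $i=0,1,\dots,n-1$. The finite set of users (players) is $\mathbf{A}\cup\mathbf{D}$. A partition (coalition structure) is $C=\{C_0,C_1,\dots,C_n\}$ with $C_i\cap C_{i'}=\emptyset$ for $i\neq i'$ and $\bigcup_{i=0}^n C_i=\mathbf{A}\cup\mathbf{D}$; $C_i$ is the set of users associated with MR $i$ ($i<n$) or with the BS ($i=n$). Each coalition $C_i$ has a real-valued utility $U(C_i)$, namely its average throughput $U(C_i)=\frac{1}{|C_i|}\sum_{l\in C_i}R_l$, where for a user $l\in C_n$ (BS) $R_l=\alpha_n W\log_2(1+P_r(n,l)/(N_0\alpha_n W))$ and for a user $l\in C_i$, $i<n$ (MR), $R_l=\alpha_i W\log_2\bigl(1+P_r(i,l)/(N_0\alpha_i W+\beta P_i)\bigr)$; here $W>0$ is the total bandwidth, $\alpha_i\ge 0$ with $\sum_{i=0}^n\alpha_i=1$ are fixed bandwidth fractions, $P_r(i,l)>0$ is the received power at user $l$ from the BS/MR $i$, $N_0>0$ the noise spectral density, $P_i$ the MR transmit power and $\beta\ge0$ the self-interference cancellation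 factor. Preference order: for a user $l$ currently in coalition $C_{i'}$ and another coalition $C_i$ ($i\ne i'$), $l$ prefers $C_i$ to $C_{i'}$, written $C_i\succ_l C_{i'}$, iff the sum of the utilities of the two coalitions strictly increases when $l$ moves, i.e. $U(C_i\cup\{l\})+U(C_{i'}\setminus\{l\})>U(C_i)+U(C_{i'})$ (the paper writes this as $U(C_i)+U(C_{i'}\setminus l)>U(C_i\setminus l)+U(C_{i'})$). Switch operation: if $C_i\succ_l C_{i'}$ for $l\in C_{i'}$, move $l$ from $C_{i'}$ to $C_i$, replacing $C$ by $(C\setminus\{C_i,C_{i'}\})\cup\{C_{i'}\setminus\{l\},C_i\cup\{l\}\}$. Algorithm: (1) form a random initial partition $C_{ini}$, set $C_{cur}=C_{ini}$, $j=0$; (2) repeat: select a user $l$ in a predetermined order, with current coalition $C_i$; if there is a coalition $C_{i'}$ with $C_{i'}\succ_l C_i$ and ($|C_{i'}|+1\le Y$ if $i'=n$, or $|C_{i'}|+1\le Z$ if $i'\in\{0,\dots,n-1\}$), where $Y,Z$ are the maximal numbers of users the BS and each MR can serve, then set $j=0$ and perform the switch of $l$ from $C_i$ to $C_{i'}$; otherwise set $j=j+1$; (3) stop when the partition reaches a stable state (no switch has occurred for $j=10(|\mathbf{A}|+|\mathbf{D}|)$ consecutive selections); the resulting partition is $C_{fin}$. *)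

theory Defs
  imports Complex_Main
begin

text \<open>Users have an arbitrary type 'u; the finite user set A \<union> D is a set UU.
  Coalitions are indexed 0..n: index i < n is MR i, index n is the BS.
  A partition is a family C :: nat \<Rightarrow> 'u set, only indices 0..n matter.\<close>

definition is_partition :: "'u set \<Rightarrow> nat \<Rightarrow> (nat \<Rightarrow> 'u set) \<Rightarrow> bool" where
  "is_partition UU n C \<longleftrightarrow>
     (\<forall>i\<le>n. \<forall>i'\<le>n. i \<noteq> i' \<longrightarrow> C i \<inter> C i' = {}) \<and> (\<Union>i\<le>n. C i) = UU"

definition rate ::
  "real \<Rightarrow> (nat \<Rightarrow> real) \<Rightarrow> (nat \<Rightarrow> 'u \<Rightarrow> real) \<Rightarrow> real \<Rightarrow> (nat \<Rightarrow> real) \<Rightarrow> real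
   \<Rightarrow> nat \<Rightarrow> nat \<Rightarrow> 'u \<Rightarrow> real" where
  "rate W \<alpha> Pr N0 P \<beta> n i l =
     (if i = n then \<alpha> n * W * log 2 (1 + Pr n l / (N0 * \<alpha> n * W))
      else \<alpha> i * W * log 2 (1 + Pr i l / (N0 * \<alpha> i * W + \<beta> * P i)))"

definition throughput_util ::
  "real \<Rightarrow> (nat \<Rightarrow> real) \<Rightarrow> (nat \<Rightarrow> 'u \<Rightarrow> real) \<Rightarrow> real \<Rightarrow> (nat \<Rightarrow> real) \<Rightarrow> real
   \<Rightarrow> nat \<Rightarrow> nat \<Rightarrow> 'u set \<Rightarrow> real" where
  "throughput_util W \<alpha> Pr N0 P \<beta> n i S =
     (\<Sum>l\<in>S. rate W \<alpha> Pr N0 P \<beta> n i l) / real (card S)"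

definition prefers ::
  "(nat \<Rightarrow> 'u set \<Rightarrow> real) \<Rightarrow> (nat \<Rightarrow> 'u set) \<Rightarrow> 'u \<Rightarrow> nat \<Rightarrow> nat \<Rightarrow> bool" where
  "prefers U C l i i' \<longleftrightarrow>
     U i' (C i' \<union> {l}) + U i (C i - {l}) > U i' (C i') + U i (C i)"

definition switch_op :: "(nat \<Rightarrow> 'u set) \<Rightarrow> 'u \<Rightarrow> nat \<Rightarrow> nat \<Rightarrow> (nat \<Rightarrow> 'u set)" where
  "switch_op C l i i' = C(i := C i - {l}, i' := C i' \<union> {l})"

definition admissible ::
  "(nat \<Rightarrow> 'u set \<Rightarrow> real) \<Rightarrow> nat \<Rightarrow> nat \<Rightarrow> nat \<Rightarrow> (nat \<Rightarrow> 'u set) \<Rightarrow> 'u \<Rightarrow> nat \<Rightarrow> nat \<Rightarrow> bool" where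
  "admissible U n Y Z C l i i' \<longleftrightarrow>
     i' \<le> n \<and> i' \<noteq> i \<and> prefers U C l i i' \<and>
     card (C i') + 1 \<le> (if i' = n then Y else Z)"

text \<open>Algorithm state: (current partition, counter j, selection index k).
  The k-th selection picks user ord k (the predetermined order).\<close>
type_synonym 'u alg_state = "(nat \<Rightarrow> 'u set) \<times> nat \<times> nat"

definition alg_step ::
  "(nat \<Rightarrow> 'u set \<Rightarrow> real) \<Rightarrow> nat \<Rightarrow> nat \<Rightarrow> nat \<Rightarrow> (nat \<Rightarrow> 'u) \<Rightarrow> 'u alg_state \<Rightarrow> 'u alg_state \<Rightarrow> bool" where
  "alg_step U n Y Z ord s s' \<longleftrightarrow>
     (case s of (C, j, k) \<Rightarrow>
       (\<exists>i\<le>n. ord k \<in> C i \<and>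
          ((\<exists>i'. admissible U n Y Z C (ord k) i i' \<and> s' = (switch_op C (ord k) i i', 0, Suc k))
           \<or> ((\<nexists>i'. admissible U n Y Z C (ord k) i i') \<and> s' = (C, Suc j, Suc k)))))"

definition alg_stopped :: "'u set \<Rightarrow> 'u alg_state \<Rightarrow> bool" where
  "alg_stopped UU s \<longleftrightarrow> fst (snd s) \<ge> 10 * card UU"

end

theory Submission
  imports Defs "HOL-Library.FuncSet"
begin

lemma switch_partition:
  assumes "is_partition UU n C" "i \<le> n" "l \<in> C i" "i' \<le> n" "i' \<noteq> i"
  shows "is_partition UU n (switch_op C l i i')"
proof -
  have d: "\<forall>a\<le>n. \<forall>b\<le>n. a \<noteq> b \<longrightarrow> C a \<inter> C b = {}" and u: "(\<Union>a\<le>n. C a) = UU"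
    using assms(1) unfolding is_partition_def by auto
  have "l \<in> UU" using u assms by auto
  show ?thesis unfolding is_partition_def switch_op_def
  proof (intro conjI allI impI)
    fix a b assume "a \<le> n" "b \<le> n" "a \<noteq> b"
    then show "(C(i := C i - {l}, i' := C i' \<union> {l})) a \<inter> (C(i := C i - {l}, i' := C i' \<union> {l})) b = {}"
    proof -
      have da: "C a \<inter> C b = {}" using d \<open>a \<le> n\<close> \<open>b \<le> n\<close> \<open>a \<noteq> b\<close> by blast
      have dai: "a \<noteq> i \<Longrightarrow> l \<notin> C a" using d \<open>a \<le> n\<close> assms(2,3) by blast
      have dbi: "b \<noteq> i \<Longrightarrow> l \<notin> C b" using d \<open>b \<le> n\<close> assms(2,3) by blast
      have dai2: "a \<noteq> i' \<Longrightarrow> a \<noteq> i \<Longrightarrow> C a \<inter> C i' = {}" using d \<open>a \<le> n\<close> assms(4) by blast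
      have dbi2: "b \<noteq> i' \<Longrightarrow> b \<noteq> i \<Longrightarrow> C b \<inter> C i' = {}" using d \<open>b \<le> n\<close> assms(4) by blast
      have dii: "C i \<inter> C i' = {}" using d assms(2,4,5) by blast
      show ?thesis using da dai dbi dai2 dbi2 dii \<open>a \<noteq> b\<close> assms(5)
        by (cases "a = i"; cases "a = i'"; cases "b = i"; cases "b = i'") auto
    qed
  next
    show "(\<Union>a\<le>n. (C(i := C i - {l}, i' := C i' \<union> {l})) a) = UU"
    proof
      show "(\<Union>a\<le>n. (C(i := C i - {l}, i' := C i' \<union> {l})) a) \<subseteq> UU"
        using u assms(2-5) \<open>l \<in> UU\<close> by (auto simp: fun_upd_def split: if_splits)
    next
      show "UU \<subseteq> (\<Union>a\<le>n. (C(i := C i - {l}, i' := C i' \<union> {l})) a)"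
      proof
        fix x assume "x \<in> UU"
        then obtain a where a: "a \<le> n" "x \<in> C a" using u by auto
        show "x \<in> (\<Union>a\<le>n. (C(i := C i - {l}, i' := C i' \<union> {l})) a)"
        proof (cases "x = l")
          case True then show ?thesis using assms(4) by (auto intro!: bexI[of _ i'])
        next
          case False then show ?thesis using a
            by (auto simp: fun_upd_def intro!: bexI[of _ a])
        qed
      qed
    qed
  qed
qed

lemma switch_phi:
  fixes U :: "nat \<Rightarrow> 'u set \<Rightarrow> real"
  assumes "prefers U C l i i'" "i \<le> n" "i' \<le> n" "i' \<noteq> i"
  shows "(\<Sum>x\<le>n. U x (switch_op C l i i' x)) > (\<Sum>x\<le>n. U x (C x))"
proof -
  define d where "d x = U x (switch_op C l i i' x) - U x (C x)" for x
  have "(\<Sum>x\<le>n. d x) = (\<Sum>x\<in>{i,i'}. d x)"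
    by (rule sum.mono_neutral_right) (auto simp: d_def switch_op_def assms)
  also have "\<dots> = d i + d i'" using assms by simp
  also have "\<dots> > 0" using assms(1,4) unfolding d_def prefers_def switch_op_def by auto
  finally have "(\<Sum>x\<le>n. d x) > 0" .
  then show ?thesis by (simp add: d_def sum_subtractf)
qed

theorem theorem1:
  fixes UU :: "'u set" and n Y Z :: nat and ord :: "nat \<Rightarrow> 'u"
    and W N0 \<beta> :: real and \<alpha> P :: "nat \<Rightarrow> real" and Pr :: "nat \<Rightarrow> 'u \<Rightarrow> real"
    and Cini :: "nat \<Rightarrow> 'u set"
  assumes "finite UU"
    and "W > 0" and "N0 > 0" and "\<beta> \<ge> 0"
    and "\<forall>i\<le>n. \<alpha> i \<ge> 0" and "(\<Sum>i\<le>n. \<alpha> i) = 1"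
    and "\<forall>i\<le>n. \<forall>l\<in>UU. Pr i l > 0"
    and "\<forall>i<n. P i \<ge> 0"
    and "\<forall>k. ord k \<in> UU"
    and "is_partition UU n Cini"
  shows "\<forall>s :: nat \<Rightarrow> 'u alg_state.
           s 0 = (Cini, 0, 0) \<and>
           (\<forall>k. \<not> alg_stopped UU (s k) \<longrightarrow>
                alg_step (throughput_util W \<alpha> Pr N0 P \<beta> n) n Y Z ord (s k) (s (Suc k)))
           \<longrightarrow> (\<exists>K. alg_stopped UU (s K) \<and> (\<forall>k<K. \<not> alg_stopped UU (s k))
                    \<and> is_partition UU n (fst (s K)))"
proof (intro allI impI)
  fix s :: "nat \<Rightarrow> 'u alg_state"
  define U where "U = throughput_util W \<alpha> Pr N0 P \<beta> n"
  assume H: "s 0 = (Cini, 0, 0) \<and>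
           (\<forall>k. \<not> alg_stopped UU (s k) \<longrightarrow>
                alg_step (throughput_util W \<alpha> Pr N0 P \<beta> n) n Y Z ord (s k) (s (Suc k)))"
  then have s0: "s 0 = (Cini, 0, 0)"
    and st: "\<And>k. \<not> alg_stopped UU (s k) \<Longrightarrow> alg_step U n Y Z ord (s k) (s (Suc k))"
    by (auto simp: U_def)
  define Phi where "Phi C = (\<Sum>x\<le>n. U x (C x))" for C :: "nat \<Rightarrow> 'u set"
  define V where "V = (\<lambda>f. \<Sum>x\<le>n. U x (f x)) ` (PiE {..n} (\<lambda>_. Pow UU))"
  have finV: "finite V" unfolding V_def using assms(1) by (auto intro!: finite_PiE)
  have PhiV: "Phi C \<in> V" if "is_partition UU n C" for C
  proof -
    have "restrict C {..n} \<in> PiE {..n} (\<lambda>_. Pow UU)"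
      using that unfolding is_partition_def by auto
    moreover have "Phi C = (\<Sum>x\<le>n. U x (restrict C {..n} x))"
      unfolding Phi_def by (rule sum.cong) auto
    ultimately show ?thesis unfolding V_def by blast
  qed
  define B where "B = 10 * card UU"
  define mu where "mu st = card {v\<in>V. v > Phi (fst st)} * (B+1) + (B - fst (snd st))"
    for st :: "'u alg_state"
  have step: "is_partition UU n (fst (s (Suc k))) \<and> mu (s (Suc k)) < mu (s k)"
    if np: "\<not> alg_stopped UU (s k)" and pk: "is_partition UU n (fst (s k))" for k
  proof -
    obtain C j q where sk: "s k = (C, j, q)" by (cases "s k") auto
    have jB: "j < B" using np sk unfolding alg_stopped_def B_def by auto
    have "alg_step U n Y Z ord (C, j, q) (s (Suc k))" using st[OF np] sk by simp
    then have "\<exists>i\<le>n. ord q \<in> C i \<and>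
          ((\<exists>i'. admissible U n Y Z C (ord q) i i' \<and> s (Suc k) = (switch_op C (ord q) i i', 0, Suc q))
           \<or> ((\<nexists>i'. admissible U n Y Z C (ord q) i i') \<and> s (Suc k) = (C, Suc j, Suc q)))"
      unfolding alg_step_def by simp
    then obtain i where i: "i \<le> n" "ord q \<in> C i" and
      alt: "(\<exists>i'. admissible U n Y Z C (ord q) i i' \<and> s (Suc k) = (switch_op C (ord q) i i', 0, Suc q))
           \<or> ((\<nexists>i'. admissible U n Y Z C (ord q) i i') \<and> s (Suc k) = (C, Suc j, Suc q))"
      by blast
    from alt show ?thesis
    proof
      assume "\<exists>i'. admissible U n Y Z C (ord q) i i' \<and> s (Suc k) = (switch_op C (ord q) i i', 0, Suc q)"
      then obtain i' where a: "admissible U n Y Z C (ord q) i i'"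
        and s1: "s (Suc k) = (switch_op C (ord q) i i', 0, Suc q)" by blast
      have a': "i' \<le> n" "i' \<noteq> i" "prefers U C (ord q) i i'" using a unfolding admissible_def by auto
      have pC: "is_partition UU n C" using pk sk by simp
      have p': "is_partition UU n (switch_op C (ord q) i i')"
        by (rule switch_partition[OF pC i a'(1,2)])
      have lt: "Phi C < Phi (switch_op C (ord q) i i')"
        unfolding Phi_def by (rule switch_phi[OF a'(3) i(1) a'(1,2)])
      have sub1: "{v\<in>V. v > Phi (switch_op C (ord q) i i')} \<subseteq> {v\<in>V. v > Phi C}"
      proof
        fix v assume "v \<in> {v\<in>V. v > Phi (switch_op C (ord q) i i')}"
        then show "v \<in> {v\<in>V. v > Phi C}" using lt by simp
      qed
      have mem: "Phi (switch_op C (ord q) i i') \<in> {v\<in>V. v > Phi C}" using lt PhiV[OF p'] by simp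
      have nmem: "Phi (switch_op C (ord q) i i') \<notin> {v\<in>V. v > Phi (switch_op C (ord q) i i')}" by simp
      have sub: "{v\<in>V. v > Phi (switch_op C (ord q) i i')} \<subset> {v\<in>V. v > Phi C}"
        using sub1 mem nmem by blast
      define a where "a = card {v\<in>V. v > Phi (switch_op C (ord q) i i')}"
      define b where "b = card {v\<in>V. v > Phi C}"
      have ab: "a < b" unfolding a_def b_def
        by (rule psubset_card_mono[OF _ sub]) (simp add: finV)
      have m1: "mu (s (Suc k)) = a * (B+1) + B" unfolding mu_def s1 a_def by simp
      have m2: "mu (s k) \<ge> b * (B+1)" unfolding mu_def sk b_def by simp
      have "(a+1) * (B+1) \<le> b * (B+1)" using ab by (intro mult_right_mono) auto
      then have "mu (s (Suc k)) < mu (s k)" using m1 m2 by simp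
      then show ?thesis using p' s1 by simp
    next
      assume "(\<nexists>i'. admissible U n Y Z C (ord q) i i') \<and> s (Suc k) = (C, Suc j, Suc q)"
      then have s1: "s (Suc k) = (C, Suc j, Suc q)" by blast
      show ?thesis using s1 sk pk jB unfolding mu_def by simp
    qed
  qed
  define good where "good k = (\<forall>k'<k. \<not> alg_stopped UU (s k'))" for k
  have inv: "good k \<Longrightarrow> is_partition UU n (fst (s k)) \<and> mu (s k) + k \<le> mu (s 0)" for k
  proof (induction k)
    case 0 then show ?case using s0 assms(10) by simp
  next
    case (Suc k)
    then have gk: "good k" and np: "\<not> alg_stopped UU (s k)" unfolding good_def by auto
    have p: "is_partition UU n (fst (s k))" and m: "mu (s k) + k \<le> mu (s 0)" using Suc.IH[OF gk] by auto
    have "is_partition UU n (fst (s (Suc k)))" and "mu (s (Suc k)) < mu (s k)" using step[OF np p] by auto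
    then show ?case using m by simp
  qed
  have ex: "\<exists>K. alg_stopped UU (s K)"
  proof (rule ccontr)
    assume "\<not> ?thesis"
    then have "good (Suc (mu (s 0)))" unfolding good_def by auto
    from inv[OF this] show False by simp
  qed
  define K where "K = (LEAST K. alg_stopped UU (s K))"
  have sK: "alg_stopped UU (s K)" unfolding K_def using ex by (rule LeastI_ex)
  have gK: "good K" unfolding good_def K_def using not_less_Least by blast
  show "\<exists>K. alg_stopped UU (s K) \<and> (\<forall>k<K. \<not> alg_stopped UU (s k)) \<and> is_partition UU n (fst (s K))"
    using sK gK inv[OF gK] unfolding good_def by blast
qed

end
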